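(* In the deterministic crowd-learning system with reward rate $\beta>0$, under selfish user behavior and for any initial condition, the average maximum age satisfies $$\overline{\Delta}_{\max}^{(\beta)}\triangleq\limsup_{T\to\infty}\frac1T\sum_{t=0}^{T-1}\mathbb{E}\Big[\max_n\Delta_n[t]\Big]\le N-1+\frac{p_{\max}}{\beta}.$$
   Context: Deterministic crowd-learning model. There are $N\ge 2$ points of interest (PoIs) and time is slotted, $t=0,1,2,\dots$. Each PoI $n$ has a price $p_n[t]\in[p_{\min},p_{\max}]$ with $0<p_{\min}\le p_{\max}$; the price sequence may be arbitrary. The service provider keeps a recorded price $r_n[t]$ for each PoI, with $r_n[0]\in[p_{\min},p_{\max}]$. Each PoI also has an age $\Delta_n[t]$, with finite initial values. In every slot exactly one user arrives and selects one PoI; we write $S_n[t]=1$ if PoI $n$ is selected and $S_n[t]=0$ otherwise. The selected PoI's record is refreshed: $r_n[t+1]=p_n[t]$ if $S_n[t]=1$, and $r_n[t+1]=r_n[t]$ otherwise. Ages evolve as $$\Delta_n[t+1]=(\Delta_n[t]+1)(1-S_n[t]).$$ Selfish behavior with reward rate $\beta>0$: the user in slot $t$ selects $n^*[t]\in\arg\max_n(\beta\Delta_n[t]-r_n[t])$, with ties broken arbitrarily. *)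

theory Defs
  imports Complex_Main "HOL-Library.Extended_Real" "HOL-Library.Liminf_Limsup"
begin

definition Ssel :: "(nat \<Rightarrow> nat) \<Rightarrow> nat \<Rightarrow> nat \<Rightarrow> nat" where
  "Ssel sel t n = (if sel t = n then 1 else 0)"

end

theory Submission
  imports Defs
begin

theorem mainTheorem2:
  fixes N :: nat and pmin pmax \<beta> :: real
    and p :: "nat \<Rightarrow> nat \<Rightarrow> real"   (* p t n = p_n[t] *)
    and r :: "nat \<Rightarrow> nat \<Rightarrow> real"   (* r t n = r_n[t] *)
    and \<Delta> :: "nat \<Rightarrow> nat \<Rightarrow> nat"   (* \<Delta> t n = \<Delta>_n[t] *)
    and sel :: "nat \<Rightarrow> nat"           (* PoI chosen by the user of slot t *)
  assumes N: "N \<ge> 2"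
    and pmin: "0 < pmin" and pminmax: "pmin \<le> pmax"
    and beta: "\<beta> > 0"
    and prices: "\<And>t n. n < N \<Longrightarrow> pmin \<le> p t n \<and> p t n \<le> pmax"
    and r0: "\<And>n. n < N \<Longrightarrow> pmin \<le> r 0 n \<and> r 0 n \<le> pmax"
    and sel_range: "\<And>t. sel t < N"
    and selfish: "\<And>t n. n < N \<Longrightarrow>
        \<beta> * real (\<Delta> t n) - r t n \<le> \<beta> * real (\<Delta> t (sel t)) - r t (sel t)"
    and r_step: "\<And>t n. n < N \<Longrightarrow>
        r (Suc t) n = (if Ssel sel t n = 1 then p t n else r t n)"
    and age_step: "\<And>t n. n < N \<Longrightarrow>
        \<Delta> (Suc t) n = (\<Delta> t n + 1) * (1 - Ssel sel t n)"
  shows "limsup (\<lambda>T. ereal ((1 / real T) *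
            (\<Sum>t<T. Max ((\<lambda>n. real (\<Delta> t n)) ` {..<N}))))
         \<le> ereal (real N - 1 + pmax / \<beta>)"
proof -
  have age: "\<Delta> (Suc t) n = (if sel t = n then 0 else \<Delta> t n + 1)" if "n < N" for t n
    using age_step[OF that] by (simp add: Ssel_def)
  have rb: "pmin \<le> r t n \<and> r t n \<le> pmax" if "n < N" for t n
  proof (induction t)
    case 0 then show ?case using r0 that by simp
  next
    case (Suc t) then show ?case using r_step[OF that] prices[OF that] by simp
  qed
  have notsel: "\<Delta> (s + j) m = \<Delta> s m + j"
    if "m < N" "\<forall>i<j. sel (s + i) \<noteq> m" for s j m
    using that(2)
  proof (induction j)
    case 0 then show ?case by simp
  next
    case (Suc j)
    then have "\<Delta> (s + j) m = \<Delta> s m + j" by auto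
    moreover have "sel (s + j) \<noteq> m" using Suc.prems by auto
    ultimately show ?case using age[OF that(1), of "s + j"] by simp
  qed
  have aftersel: "\<Delta> t n + 1 + s \<le> t" if "n < N" "sel s = n" "s < t" for s t n
    using that(3)
  proof (induction t rule: dec_induct[where i="Suc s", OF Suc_leI])
    case 1 show ?case using that(3) .
  next
    case 2 show ?case using age[OF that(1), of s] that(2) by simp
  next
    case (3 t) then show ?case using age[OF that(1), of t] by simp
  qed
  have keyA: "\<beta> * real (\<Delta> s1 m) \<le> pmax - pmin - \<beta>"
    if "m < N" "s1 < s2" "sel s1 = sel s2" "\<forall>s. s1 \<le> s \<and> s \<le> s2 \<longrightarrow> sel s \<noteq> m" for s1 s2 m
  proof -
    define k where "k = sel s1"
    have k: "k < N" using sel_range k_def by simp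
    have "\<Delta> (s1 + (s2 - s1)) m = \<Delta> s1 m + (s2 - s1)"
      by (rule notsel[OF that(1)]) (use that in auto)
    then have e1: "real (\<Delta> s2 m) = real (\<Delta> s1 m) + real (s2 - s1)" using that(2) by simp
    have "\<Delta> s2 k + 1 + s1 \<le> s2" using aftersel[OF k, of s1 s2] k_def that by simp
    then have e2: "real (\<Delta> s2 k) \<le> real (s2 - s1) - 1" by linarith
    have sf: "\<beta> * real (\<Delta> s2 m) - r s2 m \<le> \<beta> * real (\<Delta> s2 k) - r s2 k"
      using selfish[OF that(1), of s2] k_def that(3) by simp
    have "\<beta> * real (\<Delta> s2 k) \<le> \<beta> * (real (s2 - s1) - 1)"
      using e2 beta by (intro mult_left_mono) auto
    then show ?thesis using sf e1 rb[OF that(1), of s2] rb[OF k, of s2]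
      by (simp add: algebra_simps)
  qed
  have bound: "\<beta> * real (\<Delta> t m) \<le> \<beta> * (real N - 1) + pmax - pmin"
    if "N \<le> t" "m < N" for t m
  proof (rule ccontr)
    assume A: "\<not> ?thesis"
    have "\<beta> * (real N - 1) < \<beta> * real (\<Delta> t m)" using A pminmax by linarith
    then have big: "real N - 1 < real (\<Delta> t m)" using beta by simp
    have ns: "sel s \<noteq> m" if "s \<in> {t-N..<t}" for s
    proof
      assume "sel s = m"
      then have "\<Delta> t m + 1 + s \<le> t" using aftersel[OF \<open>m<N\<close>, of s t] that by simp
      then show False using that big \<open>N \<le> t\<close> by auto
    qed
    have sub: "sel ` {t-N..<t} \<subseteq> {..<N} - {m}" using ns sel_range by (auto simp del: atLeastLessThan_iff)
    have "\<not> inj_on sel {t-N..<t}"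
    proof
      assume "inj_on sel {t-N..<t}"
      then have "card (sel ` {t-N..<t}) = N" using card_image \<open>N \<le> t\<close> by fastforce
      moreover have "card (sel ` {t-N..<t}) \<le> card ({..<N} - {m})"
        by (rule card_mono[OF _ sub]) simp
      ultimately show False using \<open>m<N\<close> N by simp
    qed
    then obtain a b where ab: "a \<in> {t-N..<t}" "b \<in> {t-N..<t}" "a < b" "sel a = sel b"
      unfolding inj_on_def by (metis linorder_neqE_nat)
    have kA: "\<beta> * real (\<Delta> a m) \<le> pmax - pmin - \<beta>"
      by (rule keyA[OF \<open>m<N\<close> ab(3) ab(4)]) (use ab ns in auto)
    have "\<Delta> (a + (t - a)) m = \<Delta> a m + (t - a)"
      by (rule notsel[OF \<open>m<N\<close>]) (use ab ns in auto)
    then have "real (\<Delta> t m) = real (\<Delta> a m) + real (t - a)" using ab by simp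
    moreover have "real (t - a) \<le> real N" using ab by auto
    ultimately have "real (\<Delta> t m) \<le> real (\<Delta> a m) + real N" by linarith
    then have "\<beta> * real (\<Delta> t m) \<le> \<beta> * (real (\<Delta> a m) + real N)"
      using beta by (intro mult_left_mono) auto
    then show False using A kA by (simp add: algebra_simps)
  qed
  define B where "B = real N - 1 + pmax / \<beta>"
  have B0: "0 \<le> B" using N pmin pminmax beta unfolding B_def by auto
  have mx: "Max ((\<lambda>n. real (\<Delta> t n)) ` {..<N}) \<le> B" if "N \<le> t" for t
  proof -
    have "real (\<Delta> t n) \<le> B" if "n < N" for n
    proof -
      have "\<beta> * real (\<Delta> t n) \<le> \<beta> * B"
        using bound[OF \<open>N \<le> t\<close> that] pmin beta unfolding B_def by (simp add: algebra_simps)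
      then show ?thesis using beta by simp
    qed
    then show ?thesis using N by (subst Max_le_iff) (auto simp: lessThan_empty_iff)
  qed
  define C where "C = (\<Sum>t<N. Max ((\<lambda>n. real (\<Delta> t n)) ` {..<N}))"
  let ?f = "\<lambda>T. ereal ((1 / real T) * (\<Sum>t<T. Max ((\<lambda>n. real (\<Delta> t n)) ` {..<N})))"
  let ?g = "\<lambda>T. ereal (C / real T + B)"
  have ev: "eventually (\<lambda>T. ?f T \<le> ?g T) sequentially"
  proof (rule eventually_sequentiallyI[of N])
    fix T assume T: "N \<le> T"
    have "(\<Sum>t<T. Max ((\<lambda>n. real (\<Delta> t n)) ` {..<N}))
        = C + (\<Sum>t\<in>{N..<T}. Max ((\<lambda>n. real (\<Delta> t n)) ` {..<N}))"
      unfolding C_def using T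
      by (metis atLeast0LessThan sum.atLeastLessThan_concat zero_le)
    also have "\<dots> \<le> C + (\<Sum>t\<in>{N..<T}. B)"
      using mx by (intro add_left_mono sum_mono) auto
    also have "\<dots> \<le> C + real T * B" using B0 T by (simp add: mult_right_mono)
    finally have S: "(\<Sum>t<T. Max ((\<lambda>n. real (\<Delta> t n)) ` {..<N})) \<le> C + real T * B" .
    have Tp: "real T > 0" using T N by simp
    have "(1 / real T) * (\<Sum>t<T. Max ((\<lambda>n. real (\<Delta> t n)) ` {..<N})) \<le> (1 / real T) * (C + real T * B)"
      using S Tp by (intro mult_left_mono) auto
    also have "\<dots> = C / real T + B" using Tp by (simp add: field_simps)
    finally show "?f T \<le> ?g T" by simp
  qed
  have lim: "?g \<longlonglongrightarrow> ereal B"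
  proof -
    have "(\<lambda>T. C / real T + B) \<longlonglongrightarrow> 0 + B"
      by (intro tendsto_add tendsto_divide_0[OF tendsto_const] filterlim_at_top_imp_at_infinity filterlim_real_sequentially tendsto_const)
    then show ?thesis by (simp add: tendsto_ereal)
  qed
  have "limsup ?f \<le> limsup ?g" by (rule Limsup_mono[OF ev])
  also have "\<dots> = ereal B" by (rule lim_imp_Limsup[OF _ lim]) simp
  finally show ?thesis unfolding B_def .
qed

end
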